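(* Let $A_1,\dots,A_{12}$ be the vertices of a regular icosahedron in $\mathbb R^3$ with centre $O$, and let $\Gamma$ be a sphere centred at $O$. For each $\lambda\in\{2,4,6\}$ the sum $\sum_{i=1}^{12}|MA_i|^{\lambda}$ does not depend on the position of $M\in\Gamma$.
   Context: $|MA|$ denotes Euclidean distance. *)

theory Defs
  imports "HOL-Analysis.Analysis"
begin

definition golden :: real where "golden = (1 + sqrt 5) / 2"

definition std_icosahedron :: "(real^3) set" where
  "std_icosahedron =
     (\<Union>s\<in>{-1,1::real}. \<Union>t\<in>{-1,1::real}.
        {vector [0, s, t * golden], vector [s, t * golden, 0], vector [t * golden, 0, s]})"

definition regular_icosahedron_vertices :: "(real^3) set \<Rightarrow> real^3 \<Rightarrow> bool" where
  "regular_icosahedron_vertices V Ctr \<longleftrightarrow>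
     (\<exists>Q c. orthogonal_transformation Q \<and> c > 0 \<and>
            V = (\<lambda>x. Ctr + c *\<^sub>R Q x) ` std_icosahedron)"

end

theory Submission
  imports Defs
begin

definition icoP :: "(real*real*real) list" where
 "icoP = [(0,1,golden),(0,1,-golden),(0,-1,golden),(0,-1,-golden),
       (1,golden,0),(1,-golden,0),(-1,golden,0),(-1,-golden,0),(golden,0,1),(-golden,0,1),(golden,0,-1),(-golden,0,-1)]"

lemma poly1:
  fixes u1 u2 u3 c g a :: real
  shows "(\<Sum>(x,y,z)\<leftarrow>[(0,1,g),(0,1,-g),(0,-1,g),(0,-1,-g),
       (1,g,0),(1,-g,0),(-1,g,0),(-1,-g,0),(g,0,1),(-g,0,1),(g,0,-1),(-g,0,-1)]. (a - 2*c*(u1*x+u2*y+u3*z))^1)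
     = 12*a"
  by (simp add: algebra_simps)

lemma poly2:
  fixes u1 u2 u3 c g a :: real
  shows "(\<Sum>(x,y,z)\<leftarrow>[(0,1,g),(0,1,-g),(0,-1,g),(0,-1,-g),
       (1,g,0),(1,-g,0),(-1,g,0),(-1,-g,0),(g,0,1),(-g,0,1),(g,0,-1),(-g,0,-1)]. (a - 2*c*(u1*x+u2*y+u3*z))^2)
     = 12*a^2 + 16*c^2*(1+g^2)*(u1^2+u2^2+u3^2)"
  by (simp add: power2_eq_square algebra_simps)

lemma poly3:
  fixes u1 u2 u3 c g a :: real
  shows "(\<Sum>(x,y,z)\<leftarrow>[(0,1,g),(0,1,-g),(0,-1,g),(0,-1,-g),
       (1,g,0),(1,-g,0),(-1,g,0),(-1,-g,0),(g,0,1),(-g,0,1),(g,0,-1),(-g,0,-1)]. (a - 2*c*(u1*x+u2*y+u3*z))^3)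
     = 12*a^3 + 48*a*c^2*(1+g^2)*(u1^2+u2^2+u3^2)"
  by (simp add: power2_eq_square power3_eq_cube algebra_simps)

lemma golden_gt1: "golden > 1"
proof -
  have "sqrt 5 > 1" by simp
  thus ?thesis unfolding golden_def by simp
qed

lemma vec3_eq: "(vector [a,b,c] :: real^3) = vector [a',b',c'] \<longleftrightarrow> a = a' \<and> b = b' \<and> c = c'"
  by (auto simp: vec_eq_iff forall_3)

lemma std_eq: "std_icosahedron = set (map (\<lambda>(x,y,z). vector [x,y,z]) icoP)"
  unfolding std_icosahedron_def icoP_def by auto

lemma std_distinct: "distinct (map (\<lambda>(x,y,z). vector [x,y,z] :: real^3) icoP)"
  using golden_gt1 unfolding icoP_def by (auto simp: vec3_eq)

lemma norm3: "norm (w::real^3) ^ 2 = (w$1)^2 + (w$2)^2 + (w$3)^2"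
  unfolding power2_norm_eq_inner inner_vec_def sum_3 by (simp add: power2_eq_square)

lemma term_eq:
  assumes "x^2+y^2+z^2 = 1+golden^2"
  shows "norm (u - c *\<^sub>R (vector [x,y,z] :: real^3))^2 =
     (norm u^2 + c^2*(1+golden^2)) - 2*c*(u$1*x + u$2*y + u$3*z)"
proof -
  have "c^2*(x^2+y^2+z^2) = c^2*(1+golden^2)" using assms by simp
  then show ?thesis unfolding norm3 by (simp add: power2_eq_square algebra_simps)
qed

lemma icoP_norm: "\<forall>(x,y,z)\<in>set icoP. x^2+y^2+z^2 = 1+golden^2"
  unfolding icoP_def by auto

lemma sum_std:
  "(\<Sum>v\<in>std_icosahedron. (norm (u - c *\<^sub>R v)^2)^k) =
   (\<Sum>(x,y,z)\<leftarrow>icoP. ((norm u^2 + c^2*(1+golden^2)) - 2*c*(u$1*x + u$2*y + u$3*z))^k)"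
proof -
  have "(\<Sum>v\<in>std_icosahedron. (norm (u - c *\<^sub>R v)^2)^k) =
     (\<Sum>v\<leftarrow>map (\<lambda>(x,y,z). vector [x,y,z]) icoP. (norm (u - c *\<^sub>R v)^2)^k)"
    unfolding std_eq by (rule sum.distinct_set_conv_list[OF std_distinct])
  also have "\<dots> = (\<Sum>(x,y,z)\<leftarrow>icoP. ((norm u^2 + c^2*(1+golden^2)) - 2*c*(u$1*x + u$2*y + u$3*z))^k)"
    unfolding map_map
    apply (rule arg_cong[where f=sum_list])
    apply (rule map_cong[OF refl])
    using icoP_norm term_eq by fastforce
  finally show ?thesis .
qed

lemma key:
  assumes "norm u = norm u'" "k \<in> {1,2,3::nat}"
  shows "(\<Sum>v\<in>std_icosahedron. (norm (u - c *\<^sub>R v)^2)^k) =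
         (\<Sum>v\<in>std_icosahedron. (norm (u' - c *\<^sub>R v)^2)^k)"
proof -
  have e: "(u$1)^2 + (u$2)^2 + (u$3)^2 = (u'$1)^2 + (u'$2)^2 + (u'$3)^2"
    using assms(1) norm3 by metis
  show ?thesis
    unfolding sum_std using assms(2)
    apply (simp only: icoP_def)
    apply (elim insertE)
    using e by (simp_all only: poly1 poly2 poly3 assms(1) singleton_iff) simp_all
qed


theorem proposition5p1:
  fixes A :: "nat \<Rightarrow> real^3" and Ctr :: "real^3" and r :: real and lam :: nat
  assumes "inj_on A {1..12}"
    and "regular_icosahedron_vertices (A ` {1..12}) Ctr"
    and "lam \<in> {2, 4, 6}"
  shows "\<forall>M M'. dist M Ctr = r \<longrightarrow> dist M' Ctr = r \<longrightarrow>
           (\<Sum>i=1..12. dist M (A i) ^ lam) = (\<Sum>i=1..12. dist M' (A i) ^ lam)"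
proof (intro allI impI)
  fix M M' assume M: "dist M Ctr = r" and M': "dist M' Ctr = r"
  obtain Q c where Q: "orthogonal_transformation Q" and c: "c > 0"
    and V: "A ` {1..12} = (\<lambda>x. Ctr + c *\<^sub>R Q x) ` std_icosahedron"
    using assms(2) unfolding regular_icosahedron_vertices_def by blast
  define h where "h = (\<lambda>x. Ctr + c *\<^sub>R Q x)"
  have linQ: "linear Q" using Q unfolding orthogonal_transformation_def by blast
  have injh: "inj h" unfolding h_def
    using orthogonal_transformation_inj[OF Q] c by (auto simp: inj_def)
  obtain k where k: "k \<in> {1,2,3::nat}" "lam = 2*k" using assms(3) by auto
  have S: "(\<Sum>i=1..12. dist N (A i) ^ lam) = (\<Sum>v\<in>std_icosahedron. (norm (u - c *\<^sub>R v)^2)^k)"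
    if "Q u = N - Ctr" for N u
  proof -
    have "(\<Sum>i=1..12. dist N (A i) ^ lam) = (\<Sum>p\<in>A ` {1..12}. dist N p ^ lam)"
      using sum.reindex[OF assms(1), of "\<lambda>p. dist N p ^ lam"] by (simp add: o_def)
    also have "\<dots> = (\<Sum>v\<in>std_icosahedron. dist N (h v) ^ lam)"
      unfolding V h_def[symmetric] by (rule sum.reindex[OF inj_on_subset[OF injh], simplified])
    also have "\<dots> = (\<Sum>v\<in>std_icosahedron. (norm (u - c *\<^sub>R v)^2)^k)"
    proof (rule sum.cong[OF refl])
      fix v
      have "N - h v = Q (u - c *\<^sub>R v)"
        using that unfolding h_def linear_diff[OF linQ] linear_scale[OF linQ] by (simp add: algebra_simps)
      hence "dist N (h v) = norm (u - c *\<^sub>R v)"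
        by (simp add: dist_norm orthogonal_transformation_norm[OF Q])
      thus "dist N (h v) ^ lam = (norm (u - c *\<^sub>R v)^2)^k"
        using k(2) by (simp add: power_mult)
    qed
    finally show ?thesis .
  qed
  obtain u where u: "Q u = M - Ctr" using orthogonal_transformation_surj[OF Q] by (metis surjD)
  obtain u' where u': "Q u' = M' - Ctr" using orthogonal_transformation_surj[OF Q] by (metis surjD)
  have "norm u = norm u'"
    using M M' u u' orthogonal_transformation_norm[OF Q] by (metis dist_norm)
  then show "(\<Sum>i=1..12. dist M (A i) ^ lam) = (\<Sum>i=1..12. dist M' (A i) ^ lam)"
    unfolding S[OF u] S[OF u'] using key k(1) by blast
qed

end
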